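(* Let $\mathbf{k}=\mathbb{R}$ or $\mathbb{C}$, let $(C^\bullet,\partial)$ be a complex of finite-dimensional $\mathbf{k}$-vector spaces of odd length $d=2r-1$ with a chirality operator $\Gamma$, and let $\langle\cdot,\cdot\rangle_j$ be Euclidean (if $\mathbf{k}=\mathbb{R}$) or Hermitian (if $\mathbf{k}=\mathbb{C}$) scalar products on $C^j$, $j=0,\dots,d$, such that $\Gamma$ is self-adjoint. Let $\|\cdot\|_{\operatorname{Det}(H^\bullet(\partial))}$ be the metric on $\operatorname{Det}(H^\bullet(\partial))$ for which $\phi_{C^\bullet}$ is an isometry, where $\operatorname{Det}(C^\bullet)$ carries the metric induced by the scalar products. Then $\|\rho_\Gamma\|_{\operatorname{Det}(H^\bullet(\partial))}=1$.
   Context: Determinant lines: $\operatorname{Det}(V)=\Lambda^{\dim V}V$, $\operatorname{Det}(0)=\mathbf{k}$, $L^{-1}=\operatorname{Hom}(L,\mathbf{k})$, $l^{-1}(l)=1$, $\operatorname{Det}(V^\bullet)=\bigotimes_j\operatorname{Det}(V^j)^{(-1)^j}$; $\mu_{V_1,\dots,V_r}$ is the fusion isomorphism given by concatenating wedges. The isomorphism $\phi_{C^\bullet}:\operatorname{Det}(C^\bullet)\to\operatorname{Det}(H^\bullet(\partial))$: choose $C^j=B^j\oplus H^j\oplus A^j$ with $B^j\oplus H^j=\operatorname{Ker}\partial\cap C^j$, $B^j=\partial(A^{j-1})=\partial(C^{j-1})$, $A^{-1}=A^d=0$; for nonzero $c_j\in\operatorname{Det}(C^j)$, $a_j\in\operatorname{Det}(A^j)$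 ($a_{-1}=1$), $h_j\in\operatorname{Det}(H^j)\cong\operatorname{Det}(H^j(\partial))$ is unique with $c_j=\mu_{B^j,H^j,A^j}(\partial(a_{j-1})\otimes h_j\otimes a_j)$; $\phi_{C^\bullet}(c_0\otimes c_1^{-1}\otimes\cdots\otimes c_d^{(-1)^d})=(-1)^{\mathcal N}h_0\otimes h_1^{-1}\otimes\cdots\otimes h_d^{(-1)^d}$, $\mathcal N=\frac12\sum_j\dim A^j(\dim A^j+(-1)^{j+1})$; independent of choices. A chirality operator is an involution $\Gamma:C^\bullet\to C^\bullet$ with $\Gamma(C^j)=C^{d-j}$; $\Gamma c_j\in\operatorname{Det}(C^{d-j})$ denotes the image of $c_j\in\operatorname{Det}(C^j)$. For nonzero $c_j\in\operatorname{Det}(C^j)$, $j=0,\dots,r-1$, put $c_\Gamma=(-1)^{\mathcal R(C^\bullet)}c_0\otimes c_1^{-1}\otimes\cdots\otimes c_{r-1}^{(-1)^{r-1}}\otimes(\Gamma c_{r-1})^{(-1)^r}\otimes(\Gamma c_{r-2})^{(-1)^{r-1}}\otimes\cdots\otimes(\Gamma c_0)^{-1}\in\operatorname{Det}(C^\bullet)$, where $\mathcal R(C^\bullet)=\frac12\sum_{j=0}^{r-1}\dim C^j(\dim C^j+(-1)^{r+j})$; $c_\Gamma$ is independent of the $c_j$. The refined torsion is $\rho_\Gamma:=\phi_{C^\bullet}(c_\Gamma)\in\operatorname{Det}(H^\bullet(\partial))$. *)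

theory Defs
  imports Complex_Main "Jordan_Normal_Form.Determinant" "Jordan_Normal_Form.Conjugate"
begin

text \<open>The j-th cochain space C^j is k^(n j), i.e. carrier_vec (n j), for j = 0..d.
 The differential C^j -> C^(j+1) is the matrix D j (j < d); D d is the zero map.
 A list of vectors vs stands for the family of columns of mat_of_cols; linear
 combinations of vs are the vectors mat_of_cols m vs *v c.\<close>

text \<open>Exponent (-1)^j applied to an element of a field (or to a line coordinate).\<close>
definition sgnpow :: "nat \<Rightarrow> 'b::field \<Rightarrow> 'b" where
  "sgnpow j x = (if even j then x else inverse x)"

definition ker_sp :: "nat \<Rightarrow> (nat \<Rightarrow> nat) \<Rightarrow> (nat \<Rightarrow> 'a::field mat) \<Rightarrow> nat \<Rightarrow> 'a vec set" where
  "ker_sp d n D j = {v \<in> carrier_vec (n j). j < d \<longrightarrow> D j *\<^sub>v v = 0\<^sub>v (n (Suc j))}"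

definition img_sp :: "nat \<Rightarrow> (nat \<Rightarrow> nat) \<Rightarrow> (nat \<Rightarrow> 'a::field mat) \<Rightarrow> nat \<Rightarrow> 'a vec set" where
  "img_sp d n D j = (if j = 0 then {0\<^sub>v (n 0)} else (\<lambda>v. D (j - 1) *\<^sub>v v) ` carrier_vec (n (j - 1)))"

text \<open>qframe m K B bs: B \<subseteq> K \<subseteq> k^m subspaces; the classes of the vectors bs in K/B
 form a basis of the quotient K/B.\<close>
definition qframe :: "nat \<Rightarrow> 'a::field vec set \<Rightarrow> 'a vec set \<Rightarrow> 'a vec list \<Rightarrow> bool" where
  "qframe m K B bs \<longleftrightarrow> set bs \<subseteq> K \<and> set bs \<subseteq> carrier_vec m \<and>
     (\<forall>c \<in> carrier_vec (length bs). mat_of_cols m bs *\<^sub>v c \<in> B \<longrightarrow> c = 0\<^sub>v (length bs)) \<and>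
     (\<forall>v \<in> K. \<exists>c \<in> carrier_vec (length bs). v - mat_of_cols m bs *\<^sub>v c \<in> B)"

text \<open>A chosen basis alpha j of a complement A^j of Ker(\<partial>) \<inter> C^j in C^j
 (its classes form a basis of C^j / Ker). For j = d this is the empty list.\<close>
definition cfr :: "nat \<Rightarrow> (nat \<Rightarrow> nat) \<Rightarrow> (nat \<Rightarrow> 'a::field mat) \<Rightarrow> nat \<Rightarrow> 'a vec list" where
  "cfr d n D j = (SOME \<alpha>. qframe (n j) (carrier_vec (n j)) (ker_sp d n D j) \<alpha>)"

text \<open>The matrix whose columns are \<partial>(alpha (j-1)), bs, alpha j; its determinant is the
 coordinate of the fused wedge \<mu>(\<partial>a_{j-1} \<otimes> h_j \<otimes> a_j) w.r.t. e_1\<and>...\<and>e_{n j}.\<close>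
definition fuse_mat :: "nat \<Rightarrow> (nat \<Rightarrow> nat) \<Rightarrow> (nat \<Rightarrow> 'a::field mat) \<Rightarrow> nat \<Rightarrow> 'a vec list \<Rightarrow> 'a mat" where
  "fuse_mat d n D j bs = mat_of_cols (n j)
     ((if j = 0 then [] else map (\<lambda>v. D (j - 1) *\<^sub>v v) (cfr d n D (j - 1))) @ bs @ cfr d n D j)"

definition sgnN :: "nat \<Rightarrow> (nat \<Rightarrow> nat) \<Rightarrow> (nat \<Rightarrow> 'a::field mat) \<Rightarrow> nat" where
  "sgnN d n D = (\<Sum>j\<le>d. let a = length (cfr d n D j) in
      if even j then a * (a - 1) else a * (a + 1)) div 2"

text \<open>Representation of Det(H^\<bullet>(\<partial>)) = \<Otimes>_j Det(H^j(\<partial>))^((-1)^j), H^j(\<partial>) = Ker/Im: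
 an element \<omega> is represented by its coefficient function, which sends a tuple
 bss = [bs_0, ..., bs_d] of bases of the quotients H^j(\<partial>) to the scalar t with
 \<omega> = t \<cdot> (\<and>[bs_0]) \<otimes> (\<and>[bs_1])^(-1) \<otimes> ... ; on other arguments it is 0.
 Det(C^\<bullet>) is identified with k via the standard bases, i.e. x \<in> k stands for
 x \<cdot> (e\<and>)_0 \<otimes> ((e\<and>)_1)^(-1) \<otimes> ... .\<close>
definition hframes :: "nat \<Rightarrow> (nat \<Rightarrow> nat) \<Rightarrow> (nat \<Rightarrow> 'a::field mat) \<Rightarrow> 'a vec list list \<Rightarrow> bool" where
  "hframes d n D bss \<longleftrightarrow> length bss = Suc d \<and>
     (\<forall>j\<le>d. qframe (n j) (ker_sp d n D j) (img_sp d n D j) (bss ! j))"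

text \<open>The isomorphism \<phi>_{C^\<bullet>} : Det(C^\<bullet>) \<rightarrow> Det(H^\<bullet>(\<partial>)), computed with the choice
 H^j = span(bs_j), A^j = span(alpha j), a_j = \<and>(alpha j): then h_j = (c_j-coordinate / det M_j)\<cdot>\<and>bs_j.\<close>
definition phiC :: "nat \<Rightarrow> (nat \<Rightarrow> nat) \<Rightarrow> (nat \<Rightarrow> 'a::field mat) \<Rightarrow> 'a \<Rightarrow> 'a vec list list \<Rightarrow> 'a" where
  "phiC d n D x bss = (if hframes d n D bss then
      (-1) ^ sgnN d n D * x * (\<Prod>j\<le>d. sgnpow j (inverse (det (fuse_mat d n D j (bss ! j)))))
    else 0)"

definition scalar_product :: "nat \<Rightarrow> ('a::{conjugatable_field,real_normed_field} vec \<Rightarrow> 'a vec \<Rightarrow> 'a) \<Rightarrow> bool" where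
  "scalar_product m sp \<longleftrightarrow>
     (\<forall>u \<in> carrier_vec m. \<forall>v \<in> carrier_vec m. \<forall>w \<in> carrier_vec m. sp (u + v) w = sp u w + sp v w) \<and>
     (\<forall>a. \<forall>u \<in> carrier_vec m. \<forall>v \<in> carrier_vec m. sp (a \<cdot>\<^sub>v u) v = a * sp u v) \<and>
     (\<forall>u \<in> carrier_vec m. \<forall>v \<in> carrier_vec m. sp u v = conjugate (sp v u)) \<and>
     (\<forall>u \<in> carrier_vec m. u \<noteq> 0\<^sub>v m \<longrightarrow> (\<exists>t::real. t > 0 \<and> sp u u = of_real t))"

text \<open>Gram matrix of a list of vectors; the induced metric on Det(V) is
 |v_1 \<and> ... \<and> v_m| = sqrt(det Gram(v)).\<close>
definition gram :: "('a::{conjugatable_field,real_normed_field} vec \<Rightarrow> 'a vec \<Rightarrow> 'a) \<Rightarrow> 'a vec list \<Rightarrow> 'a mat" where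
  "gram sp vs = mat (length vs) (length vs) (\<lambda>(i, k). sp (vs ! i) (vs ! k))"

definition wedge_norm :: "('a::{conjugatable_field,real_normed_field} vec \<Rightarrow> 'a vec \<Rightarrow> 'a) \<Rightarrow> 'a vec list \<Rightarrow> real" where
  "wedge_norm sp vs = sqrt (norm (det (gram sp vs)))"

definition std_basis :: "nat \<Rightarrow> 'a::zero_neq_one vec list" where
  "std_basis m = map (\<lambda>i. unit_vec m i) [0..<m]"

text \<open>The metric on Det(C^\<bullet>) induced by the scalar products sp j (norm on duals:
 |l^(-1)| = 1/|l|; norms multiply on tensor products).\<close>
definition detC_norm :: "nat \<Rightarrow> (nat \<Rightarrow> nat) \<Rightarrow> (nat \<Rightarrow> 'a::{conjugatable_field,real_normed_field} vec \<Rightarrow> 'a vec \<Rightarrow> 'a) \<Rightarrow> 'a \<Rightarrow> real" where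
  "detC_norm d n sp x = norm x * (\<Prod>j\<le>d. sgnpow j (wedge_norm (sp j) (std_basis (n j))))"

definition detH_norm :: "nat \<Rightarrow> (nat \<Rightarrow> nat) \<Rightarrow> (nat \<Rightarrow> 'a::{conjugatable_field,real_normed_field} mat) \<Rightarrow> (nat \<Rightarrow> 'a vec \<Rightarrow> 'a vec \<Rightarrow> 'a) \<Rightarrow> ('a vec list list \<Rightarrow> 'a) \<Rightarrow> real" where
  "detH_norm d n D sp \<omega> = detC_norm d n sp (THE x. phiC d n D x = \<omega>)"

definition cochain_complex :: "nat \<Rightarrow> (nat \<Rightarrow> nat) \<Rightarrow> (nat \<Rightarrow> 'a::field mat) \<Rightarrow> bool" where
  "cochain_complex d n D \<longleftrightarrow> (\<forall>j<d. D j \<in> carrier_mat (n (Suc j)) (n j)) \<and>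
     (\<forall>j. Suc j < d \<longrightarrow> D (Suc j) * D j = 0\<^sub>m (n (Suc (Suc j))) (n j))"

definition chirality :: "nat \<Rightarrow> (nat \<Rightarrow> nat) \<Rightarrow> (nat \<Rightarrow> 'a::field mat) \<Rightarrow> bool" where
  "chirality d n Gam \<longleftrightarrow> (\<forall>j\<le>d. Gam j \<in> carrier_mat (n (d - j)) (n j) \<and>
     Gam (d - j) * Gam j = 1\<^sub>m (n j))"

definition sgnR :: "nat \<Rightarrow> (nat \<Rightarrow> nat) \<Rightarrow> nat" where
  "sgnR r n = (\<Sum>j<r. if even (r + j) then n j * (n j + 1) else n j * (n j - 1)) div 2"

text \<open>c_\<Gamma> \<in> Det(C^\<bullet>) \<cong> k built from c_j = g j \<cdot> e\<and> \<in> Det(C^j), j < r;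
 \<Gamma> c_j has coordinate g j * det (Gam j) in Det(C^(d-j)), and sits in position d - j.\<close>
definition c_Gamma :: "nat \<Rightarrow> nat \<Rightarrow> (nat \<Rightarrow> nat) \<Rightarrow> (nat \<Rightarrow> 'a::field mat) \<Rightarrow> (nat \<Rightarrow> 'a) \<Rightarrow> 'a" where
  "c_Gamma r d n Gam g = (-1) ^ sgnR r n *
     (\<Prod>j<r. sgnpow j (g j) * sgnpow (d - j) (g j * det (Gam j)))"

definition rho_Gamma :: "nat \<Rightarrow> nat \<Rightarrow> (nat \<Rightarrow> nat) \<Rightarrow> (nat \<Rightarrow> 'a::field mat) \<Rightarrow> (nat \<Rightarrow> 'a::field mat) \<Rightarrow> (nat \<Rightarrow> 'a) \<Rightarrow> 'a vec list list \<Rightarrow> 'a" where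
  "rho_Gamma r d n D Gam g = phiC d n D (c_Gamma r d n Gam g)"

definition lemma4p3_claim :: "'a::{conjugatable_field,real_normed_field} itself \<Rightarrow> bool" where
  "lemma4p3_claim _ \<longleftrightarrow>
    (\<forall>(r::nat) (d::nat) (n::nat \<Rightarrow> nat) (D::nat \<Rightarrow> 'a mat) (Gam::nat \<Rightarrow> 'a mat)
       (sp::nat \<Rightarrow> 'a vec \<Rightarrow> 'a vec \<Rightarrow> 'a) (g::nat \<Rightarrow> 'a).
      r \<ge> 1 \<longrightarrow> d = 2 * r - 1 \<longrightarrow>
      cochain_complex d n D \<longrightarrow>
      chirality d n Gam \<longrightarrow>
      (\<forall>j\<le>d. scalar_product (n j) (sp j)) \<longrightarrow>
      (\<forall>j\<le>d. \<forall>u \<in> carrier_vec (n j). \<forall>v \<in> carrier_vec (n (d - j)).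
          sp (d - j) (Gam j *\<^sub>v u) v = sp j u (Gam (d - j) *\<^sub>v v)) \<longrightarrow>
      (\<forall>j<r. g j \<noteq> 0) \<longrightarrow>
      detH_norm d n D sp (rho_Gamma r d n D Gam g) = 1)"

end

theory Submission
  imports Defs
begin

lemma mat_of_cols_append_mult:
  assumes c1: "c1 \<in> carrier_vec (length xs)" and c2: "c2 \<in> carrier_vec (length ys)"
  shows "mat_of_cols m (xs @ ys) *\<^sub>v (c1 @\<^sub>v c2) = mat_of_cols m xs *\<^sub>v c1 + mat_of_cols m ys *\<^sub>v c2"
proof (rule eq_vecI)
  fix i assume "i < dim_vec (mat_of_cols m xs *\<^sub>v c1 + mat_of_cols m ys *\<^sub>v c2)"
  hence i: "i < m" by simp
  have r: "row (mat_of_cols m (xs @ ys)) i = row (mat_of_cols m xs) i @\<^sub>v row (mat_of_cols m ys) i"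
    by (rule eq_vecI) (auto simp: mat_of_cols_def i nth_append)
  show "(mat_of_cols m (xs @ ys) *\<^sub>v (c1 @\<^sub>v c2)) $ i = (mat_of_cols m xs *\<^sub>v c1 + mat_of_cols m ys *\<^sub>v c2) $ i"
    using i c1 c2 by (simp add: r scalar_prod_append[of _ "length xs" _ "length ys"])
qed simp

lemma split_vec: assumes "c \<in> carrier_vec (a + b)"
  obtains c1 c2 where "c1 \<in> carrier_vec a" "c2 \<in> carrier_vec b" "c = c1 @\<^sub>v c2"
  using vec_first_last_append[OF assms] vec_first_carrier vec_last_carrier by metis

lemma mat_of_cols_single_mult:
  fixes v :: "'a::comm_ring_1 vec"
  assumes v: "v \<in> carrier_vec m" and c: "c \<in> carrier_vec 1"
  shows "mat_of_cols m [v] *\<^sub>v c = (c $ 0) \<cdot>\<^sub>v v"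
  using v c by (intro eq_vecI) (auto simp: mat_of_cols_def scalar_prod_def row_def)

lemma inj_le:
  fixes M :: "'a::field mat"
  assumes M: "M \<in> carrier_mat m L"
    and inj: "\<forall>c\<in>carrier_vec L. M *\<^sub>v c = 0\<^sub>v m \<longrightarrow> c = 0\<^sub>v L"
  shows "L \<le> m"
proof (rule ccontr)
  assume "\<not> L \<le> m" hence lt: "m < L" by simp
  define M' where "M' = mat L L (\<lambda>(i,k). if i < m then M $$ (i,k) else 0)"
  have M'c: "M' \<in> carrier_mat L L" unfolding M'_def by simp
  have eq: "M' = mat\<^sub>r L L (\<lambda>i. if i = m then 0\<^sub>v L else row M' i)"
    by (rule eq_matI) (auto simp: M'_def lt)
  have "det M' = 0"
    by (subst eq, rule det_row_0[OF lt]) (auto simp: M'_def)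
  then obtain v where v: "v \<in> carrier_vec L" "v \<noteq> 0\<^sub>v L" "M' *\<^sub>v v = 0\<^sub>v L"
    using det_0_iff_vec_prod_zero_field[OF M'c] by blast
  have "M *\<^sub>v v = 0\<^sub>v m"
  proof (rule eq_vecI)
    fix i assume "i < dim_vec (0\<^sub>v m :: 'a vec)"
    hence i: "i < m" by simp
    have "row M i = row M' i" using M i lt by (intro eq_vecI) (auto simp: M'_def)
    hence "(M *\<^sub>v v) $ i = (M' *\<^sub>v v) $ i" using M i lt M'c by simp
    thus "(M *\<^sub>v v) $ i = 0\<^sub>v m $ i" using v i lt by simp
  qed (use M in simp)
  with inj v show False by blast
qed

lemma bij_square:
  fixes M :: "'a::field mat"
  assumes M: "M \<in> carrier_mat m L"
    and inj: "\<forall>c\<in>carrier_vec L. M *\<^sub>v c = 0\<^sub>v m \<longrightarrow> c = 0\<^sub>v L"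
    and surj: "\<forall>v\<in>carrier_vec m. \<exists>c\<in>carrier_vec L. M *\<^sub>v c = v"
  shows "L = m \<and> det M \<noteq> 0"
proof -
  obtain f where f: "\<And>v. v \<in> carrier_vec m \<Longrightarrow> f v \<in> carrier_vec L \<and> M *\<^sub>v f v = v"
    using surj by metis
  define N where "N = mat L m (\<lambda>(i,k). f (unit_vec m k) $ i)"
  have N: "N \<in> carrier_mat L m" unfolding N_def by simp
  have colN: "col N k = f (unit_vec m k)" if k: "k < m" for k
    using f[of "unit_vec m k"] k by (intro eq_vecI) (auto simp: N_def)
  have MN: "M * N = 1\<^sub>m m"
  proof (rule eq_matI)
    fix i k assume i: "i < dim_row (1\<^sub>m m :: 'a mat)" and k: "k < dim_col (1\<^sub>m m :: 'a mat)"
    have "(M * N) $$ (i,k) = row M i \<bullet> col N k" using i k M N by simp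
    also have "\<dots> = (M *\<^sub>v f (unit_vec m k)) $ i" using i k M by (simp add: colN)
    also have "\<dots> = (1\<^sub>m m :: 'a mat) $$ (i,k)" using f[of "unit_vec m k"] i k by simp
    finally show "(M * N) $$ (i,k) = (1\<^sub>m m :: 'a mat) $$ (i,k)" .
  qed (use M N in auto)
  have injN: "\<forall>c\<in>carrier_vec m. N *\<^sub>v c = 0\<^sub>v L \<longrightarrow> c = 0\<^sub>v m"
  proof (intro ballI impI)
    fix c :: "'a vec" assume c: "c \<in> carrier_vec m" and "N *\<^sub>v c = 0\<^sub>v L"
    hence "M *\<^sub>v (N *\<^sub>v c) = 0\<^sub>v m" using M by (auto intro!: eq_vecI)
    hence "(M * N) *\<^sub>v c = 0\<^sub>v m" using M N c by simp
    thus "c = 0\<^sub>v m" using MN c by simp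
  qed
  have "m \<le> L" by (rule inj_le[OF N injN])
  moreover have "L \<le> m" by (rule inj_le[OF M inj])
  ultimately have Lm: "L = m" by simp
  have "det M * det N = 1" using det_mult[of M m N] M N MN Lm by simp
  thus ?thesis using Lm by auto
qed

definition subsp :: "nat \<Rightarrow> 'a::field vec set \<Rightarrow> bool" where
  "subsp m S \<longleftrightarrow> S \<subseteq> carrier_vec m \<and> 0\<^sub>v m \<in> S \<and> (\<forall>u\<in>S. \<forall>v\<in>S. u + v \<in> S) \<and> (\<forall>a. \<forall>u\<in>S. a \<cdot>\<^sub>v u \<in> S)"

lemma lincomb_in_subsp:
  assumes S: "subsp m S" and bs: "set bs \<subseteq> S" and c: "c \<in> carrier_vec (length bs)"
  shows "mat_of_cols m bs *\<^sub>v c \<in> S"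
  using bs c
proof (induction bs arbitrary: c)
  case Nil
  hence "mat_of_cols m [] *\<^sub>v c = 0\<^sub>v m" by (intro eq_vecI) (auto simp: mat_of_cols_def scalar_prod_def)
  then show ?case using S unfolding subsp_def by simp
next
  case (Cons b bs)
  have c: "c \<in> carrier_vec (1 + length bs)" using Cons.prems by simp
  obtain c1 c2 where c1: "c1 \<in> carrier_vec 1" and c2: "c2 \<in> carrier_vec (length bs)" and cc: "c = c1 @\<^sub>v c2"
    using split_vec[OF c] by blast
  have bS: "b \<in> S" and bsS: "set bs \<subseteq> S" using Cons.prems by auto
  have bc: "b \<in> carrier_vec m" using bS S unfolding subsp_def by auto
  have "mat_of_cols m (b # bs) *\<^sub>v c = mat_of_cols m [b] *\<^sub>v c1 + mat_of_cols m bs *\<^sub>v c2"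
    using mat_of_cols_append_mult[of c1 "[b]" c2 bs m] c1 c2 cc by simp
  also have "\<dots> = (c1 $ 0) \<cdot>\<^sub>v b + mat_of_cols m bs *\<^sub>v c2"
    using mat_of_cols_single_mult[OF bc c1] by simp
  finally show ?case using Cons.IH[OF bsS c2] bS S unfolding subsp_def by simp
qed

lemma qframe_exists:
  fixes B K :: "'a::field vec set"
  assumes B: "subsp m B" and K: "subsp m K" and BK: "B \<subseteq> K"
  shows "\<exists>bs. qframe m K B bs"
proof -
  define P where "P bs \<longleftrightarrow> set bs \<subseteq> K \<and> set bs \<subseteq> carrier_vec m \<and>
     (\<forall>c \<in> carrier_vec (length bs). mat_of_cols m bs *\<^sub>v c \<in> B \<longrightarrow> c = 0\<^sub>v (length bs))" for bs
  have P0: "P []" unfolding P_def by auto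
  have B0: "0\<^sub>v m \<in> B" using B unfolding subsp_def by blast
  have Bsm: "\<And>x u. u \<in> B \<Longrightarrow> x \<cdot>\<^sub>v u \<in> B" using B unfolding subsp_def by blast
  have vcK: "\<And>v. v \<in> K \<Longrightarrow> v \<in> carrier_vec m" using K unfolding subsp_def by blast
  have bnd: "\<forall>bs. P bs \<longrightarrow> length bs < Suc m"
  proof (intro allI impI)
    fix bs assume "P bs"
    hence "\<forall>c\<in>carrier_vec (length bs). mat_of_cols m bs *\<^sub>v c = 0\<^sub>v m \<longrightarrow> c = 0\<^sub>v (length bs)"
      using B0 unfolding P_def by metis
    from inj_le[OF _ this] show "length bs < Suc m" by simp
  qed
  obtain bs where Pbs: "P bs" and mx: "\<forall>y. P y \<longrightarrow> length y \<le> length bs"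
    using ex_has_greatest_nat[of P "[]" length "Suc m"] P0 bnd by blast
  have span: "\<exists>c \<in> carrier_vec (length bs). v - mat_of_cols m bs *\<^sub>v c \<in> B" if v: "v \<in> K" for v
  proof (rule ccontr)
    assume nv: "\<not> ?thesis"
    have vc: "v \<in> carrier_vec m" using v vcK by blast
    have bsc: "set bs \<subseteq> carrier_vec m" using Pbs unfolding P_def by auto
    have "P (bs @ [v])"
      unfolding P_def
    proof (intro conjI ballI impI)
      show "set (bs @ [v]) \<subseteq> K" "set (bs @ [v]) \<subseteq> carrier_vec m" using Pbs v vc unfolding P_def by auto
      fix c' assume c': "c' \<in> carrier_vec (length (bs @ [v]))" and inB: "mat_of_cols m (bs @ [v]) *\<^sub>v c' \<in> B"
      have c'': "c' \<in> carrier_vec (length bs + 1)" using c' by simp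
      obtain c1 c2 where c1: "c1 \<in> carrier_vec (length bs)" and c2: "c2 \<in> carrier_vec 1" and cc: "c' = c1 @\<^sub>v c2"
        using split_vec[OF c''] by blast
      define a where "a = c2 $ 0"
      define w where "w = mat_of_cols m bs *\<^sub>v c1"
      have wc: "w \<in> carrier_vec m" unfolding w_def using mult_mat_vec_carrier[OF mat_of_cols_carrier(1) c1] .
      have c2': "c2 \<in> carrier_vec (length [v])" using c2 by simp
      have eq: "mat_of_cols m (bs @ [v]) *\<^sub>v c' = w + a \<cdot>\<^sub>v v"
        unfolding cc w_def a_def using mat_of_cols_append_mult[OF c1 c2'] mat_of_cols_single_mult[OF vc c2] by simp
      show "c' = 0\<^sub>v (length (bs @ [v]))"
      proof (cases "a = 0")
        case True
        have "w + 0 \<cdot>\<^sub>v v = w" using wc vc by (intro eq_vecI) auto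
        hence "w \<in> B" using inB eq True by simp
        hence "c1 = 0\<^sub>v (length bs)" using Pbs c1 unfolding P_def w_def by auto
        moreover have "c2 = 0\<^sub>v 1" using c2 True a_def by (intro eq_vecI) auto
        ultimately show ?thesis using cc by (intro eq_vecI) auto
      next
        case False
        have "(inverse a) \<cdot>\<^sub>v (w + a \<cdot>\<^sub>v v) \<in> B" using inB eq Bsm by simp
        moreover have "(inverse a) \<cdot>\<^sub>v (w + a \<cdot>\<^sub>v v) = v - mat_of_cols m bs *\<^sub>v ((- inverse a) \<cdot>\<^sub>v c1)"
        proof -
          have "mat_of_cols m bs *\<^sub>v ((- inverse a) \<cdot>\<^sub>v c1) = (- inverse a) \<cdot>\<^sub>v w"
            unfolding w_def by (rule mult_mat_vec[OF mat_of_cols_carrier(1) c1])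
          moreover have "(inverse a) \<cdot>\<^sub>v (w + a \<cdot>\<^sub>v v) = v - (- inverse a) \<cdot>\<^sub>v w"
          proof (rule eq_vecI)
            fix i assume "i < dim_vec (v - (- inverse a) \<cdot>\<^sub>v w)"
            hence i: "i < m" using vc wc by simp
            have "inverse a * (w $ i + a * v $ i) = v $ i + inverse a * w $ i"
              using False by (simp add: distrib_left)
            thus "(inverse a \<cdot>\<^sub>v (w + a \<cdot>\<^sub>v v)) $ i = (v - (- inverse a) \<cdot>\<^sub>v w) $ i"
              using i wc vc by simp
          qed (use wc vc in simp)
          ultimately show ?thesis by simp
        qed
        moreover have "(- inverse a) \<cdot>\<^sub>v c1 \<in> carrier_vec (length bs)" using c1 by simp
        ultimately have False using nv by metis
        thus ?thesis ..
      qed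
    qed
    with mx have "length (bs @ [v]) \<le> length bs" by blast
    thus False by simp
  qed
  show ?thesis
    using Pbs span unfolding qframe_def P_def by blast
qed

lemma mat_of_cols_map_mult:
  fixes D :: "'a::comm_ring_1 mat"
  assumes bs: "set bs \<subseteq> carrier_vec n" and D: "D \<in> carrier_mat m n" and c: "c \<in> carrier_vec (length bs)"
  shows "mat_of_cols m (map (\<lambda>v. D *\<^sub>v v) bs) *\<^sub>v c = D *\<^sub>v (mat_of_cols n bs *\<^sub>v c)"
proof -
  have "mat_of_cols m (map (\<lambda>v. D *\<^sub>v v) bs) = D * mat_of_cols n bs"
    using bs D by (intro eq_matI) (auto simp: mat_of_cols_index col_mat_of_cols[of _ _ n] nth_mem subsetD)
  thus ?thesis using D c assoc_mult_mat_vec[of D m n "mat_of_cols n bs" "length bs" c] by simp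
qed

lemma mat_of_cols_Nil_mult: "c \<in> carrier_vec 0 \<Longrightarrow> mat_of_cols m [] *\<^sub>v c = (0\<^sub>v m :: 'a::semiring_0 vec)"
  by (intro eq_vecI) (auto simp: mat_of_cols_def scalar_prod_def)

lemma carrier_vec_0_eq: "c \<in> carrier_vec 0 \<Longrightarrow> c = 0\<^sub>v 0"
  by (intro eq_vecI) auto

lemma subsp_carrier: "subsp m (carrier_vec m :: 'a::field vec set)"
  unfolding subsp_def by auto

lemma vec_H1:
  fixes x y z :: "'a::ring_1 vec"
  assumes "x \<in> carrier_vec m" "y \<in> carrier_vec m" "z \<in> carrier_vec m"
    "x + (y + z) = 0\<^sub>v m" "z = 0\<^sub>v m"
  shows "y = (- 1) \<cdot>\<^sub>v x"
proof (rule eq_vecI)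
  fix i assume "i < dim_vec ((- 1) \<cdot>\<^sub>v x)"
  hence i: "i < m" using assms by simp
  have "(x + (y + z)) $ i = 0" using assms(4) i by simp
  thus "y $ i = ((- 1) \<cdot>\<^sub>v x) $ i" using assms i by (simp add: algebra_simps eq_neg_iff_add_eq_0)
qed (use assms in simp)

lemma vec_H3:
  fixes x y z :: "'a::ring_1 vec"
  assumes "x \<in> carrier_vec m" "y \<in> carrier_vec m" "z \<in> carrier_vec m"
    "x + (y + z) = 0\<^sub>v m" "y = 0\<^sub>v m" "z = 0\<^sub>v m"
  shows "x = 0\<^sub>v m"
proof (rule eq_vecI)
  fix i assume "i < dim_vec (0\<^sub>v m :: 'a vec)"
  hence i: "i < m" by simp
  have "(x + (y + z)) $ i = 0" using assms(4) i by simp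
  thus "x $ i = 0\<^sub>v m $ i" using assms i by simp
qed (use assms in simp)

lemma vec_H4:
  fixes u v w z :: "'a::ring_1 vec"
  assumes "v \<in> carrier_vec m" "w \<in> carrier_vec m" "z \<in> carrier_vec m"
    "u = (v - z) - w"
  shows "u + (w + z) = v"
proof (rule eq_vecI)
  fix i assume "i < dim_vec v"
  hence i: "i < m" using assms by simp
  thus "(u + (w + z)) $ i = v $ i" using assms i by simp
qed (use assms in simp)

lemma mcv_carrier[simp]: "mat_of_cols m xs *\<^sub>v c \<in> carrier_vec m"
  by (rule carrier_vecI) simp

lemma mult_zero_vec_right: "M \<in> carrier_mat m k \<Longrightarrow> M *\<^sub>v 0\<^sub>v k = (0\<^sub>v m :: 'a::semiring_0 vec)"
  by (intro eq_vecI) auto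

context
  fixes d :: nat and n :: "nat \<Rightarrow> nat" and D :: "nat \<Rightarrow> 'a::field mat"
  assumes cc: "cochain_complex d n D"
begin

lemma Dcar: "j < d \<Longrightarrow> D j \<in> carrier_mat (n (Suc j)) (n j)"
  using cc unfolding cochain_complex_def by blast

lemma DD: "Suc j < d \<Longrightarrow> D (Suc j) * D j = 0\<^sub>m (n (Suc (Suc j))) (n j)"
  using cc unfolding cochain_complex_def by blast

lemma ker_subsp: "j \<le> d \<Longrightarrow> subsp (n j) (ker_sp d n D j)"
  unfolding subsp_def ker_sp_def
proof (intro conjI ballI allI)
  show "{v \<in> carrier_vec (n j). j < d \<longrightarrow> D j *\<^sub>v v = 0\<^sub>v (n (Suc j))} \<subseteq> carrier_vec (n j)" by auto
  show "0\<^sub>v (n j) \<in> {v \<in> carrier_vec (n j). j < d \<longrightarrow> D j *\<^sub>v v = 0\<^sub>v (n (Suc j))}"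
    using Dcar[of j] by (auto intro!: eq_vecI)
next
  fix u v assume u: "u \<in> {v \<in> carrier_vec (n j). j < d \<longrightarrow> D j *\<^sub>v v = 0\<^sub>v (n (Suc j))}"
    and v: "v \<in> {v \<in> carrier_vec (n j). j < d \<longrightarrow> D j *\<^sub>v v = 0\<^sub>v (n (Suc j))}"
  show "u + v \<in> {v \<in> carrier_vec (n j). j < d \<longrightarrow> D j *\<^sub>v v = 0\<^sub>v (n (Suc j))}"
    using u v Dcar[of j] by (auto simp: mult_add_distrib_mat_vec[of _ "n (Suc j)" "n j"])
next
  fix a u assume u: "u \<in> {v \<in> carrier_vec (n j). j < d \<longrightarrow> D j *\<^sub>v v = 0\<^sub>v (n (Suc j))}"
  show "a \<cdot>\<^sub>v u \<in> {v \<in> carrier_vec (n j). j < d \<longrightarrow> D j *\<^sub>v v = 0\<^sub>v (n (Suc j))}"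
    using u Dcar[of j] by (auto simp: mult_mat_vec[of _ "n (Suc j)" "n j"])
qed

lemma img_subsp: "j \<le> d \<Longrightarrow> subsp (n j) (img_sp d n D j)"
proof (cases "j = 0")
  case True
  have "img_sp d n D j = {0\<^sub>v (n j)}" using True unfolding img_sp_def by simp
  moreover have "a \<cdot>\<^sub>v 0\<^sub>v (n j) = 0\<^sub>v (n j)" for a :: 'a by (intro eq_vecI) auto
  moreover have "0\<^sub>v (n j) + 0\<^sub>v (n j) = (0\<^sub>v (n j) :: 'a vec)" by (intro eq_vecI) auto
  ultimately show ?thesis unfolding subsp_def by simp
next
  case False
  assume jd: "j \<le> d"
  have Dj: "D (j - 1) \<in> carrier_mat (n j) (n (j - 1))" using Dcar[of "j - 1"] False jd by simp
  let ?I = "(\<lambda>v. D (j - 1) *\<^sub>v v) ` carrier_vec (n (j - 1))"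
  have img: "img_sp d n D j = ?I" using False unfolding img_sp_def by simp
  have c1: "?I \<subseteq> carrier_vec (n j)" using Dj by auto
  have "D (j - 1) *\<^sub>v 0\<^sub>v (n (j - 1)) = 0\<^sub>v (n j)" using Dj by (auto intro!: eq_vecI)
  hence c2: "0\<^sub>v (n j) \<in> ?I" by (intro image_eqI[of _ _ "0\<^sub>v (n (j - 1))"]) auto
  have c3: "u + v \<in> ?I" if uI: "u \<in> ?I" and vI: "v \<in> ?I" for u v
  proof -
    obtain x where x: "x \<in> carrier_vec (n (j - 1))" "u = D (j - 1) *\<^sub>v x" using uI by blast
    obtain y where y: "y \<in> carrier_vec (n (j - 1))" "v = D (j - 1) *\<^sub>v y" using vI by blast
    have "u + v = D (j - 1) *\<^sub>v (x + y)" using x y Dj by (simp add: mult_add_distrib_mat_vec)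
    moreover have "x + y \<in> carrier_vec (n (j - 1))" using x y by simp
    ultimately show ?thesis by (rule image_eqI)
  qed
  have c4: "a \<cdot>\<^sub>v u \<in> ?I" if uI: "u \<in> ?I" for a u
  proof -
    obtain x where x: "x \<in> carrier_vec (n (j - 1))" "u = D (j - 1) *\<^sub>v x" using uI by blast
    have "a \<cdot>\<^sub>v u = D (j - 1) *\<^sub>v (a \<cdot>\<^sub>v x)" using x Dj by (simp add: mult_mat_vec)
    moreover have "a \<cdot>\<^sub>v x \<in> carrier_vec (n (j - 1))" using x by simp
    ultimately show ?thesis by (rule image_eqI)
  qed
  show ?thesis unfolding subsp_def img using c1 c2 c3 c4 by (intro conjI ballI allI) auto
qed

lemma img_ker: "j \<le> d \<Longrightarrow> img_sp d n D j \<subseteq> ker_sp d n D j"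
proof (cases "j = 0")
  case True
  assume jd: "j \<le> d"
  have "0\<^sub>v (n j) \<in> ker_sp d n D j" using ker_subsp[OF jd] unfolding subsp_def by blast
  thus ?thesis using True unfolding img_sp_def by simp
next
  case False
  assume jd: "j \<le> d"
  have Dj: "D (j - 1) \<in> carrier_mat (n j) (n (j - 1))" using Dcar[of "j - 1"] False jd by simp
  show ?thesis
  proof
    fix v assume "v \<in> img_sp d n D j"
    then obtain x where x: "x \<in> carrier_vec (n (j - 1))" and v: "v = D (j - 1) *\<^sub>v x"
      using False unfolding img_sp_def by auto
    have vc: "v \<in> carrier_vec (n j)" using Dj x v by simp
    have "D j *\<^sub>v v = 0\<^sub>v (n (Suc j))" if jd': "j < d"
    proof -
      have Dj': "D j \<in> carrier_mat (n (Suc j)) (n j)" using Dcar[OF jd'] .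
      have eq: "D j * D (j - 1) = 0\<^sub>m (n (Suc j)) (n (j - 1))" using DD[of "j - 1"] False jd' by simp
      have "D j *\<^sub>v (D (j - 1) *\<^sub>v x) = (D j * D (j - 1)) *\<^sub>v x" using Dj Dj' x by simp
      also have "\<dots> = 0\<^sub>v (n (Suc j))" unfolding eq using x by (auto intro!: eq_vecI)
      finally show ?thesis using v by simp
    qed
    thus "v \<in> ker_sp d n D j" unfolding ker_sp_def using vc by simp
  qed
qed

lemma cfr_qframe: "j \<le> d \<Longrightarrow> qframe (n j) (carrier_vec (n j)) (ker_sp d n D j) (cfr d n D j)"
  unfolding cfr_def
  by (rule someI_ex, rule qframe_exists[OF ker_subsp subsp_carrier]) (auto simp: ker_sp_def)

lemma cfr_d: "cfr d n D d = []"
proof (rule ccontr)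
  assume ne: "cfr d n D d \<noteq> []"
  let ?a = "cfr d n D d"
  have q: "qframe (n d) (carrier_vec (n d)) (ker_sp d n D d) ?a" using cfr_qframe by simp
  define c where "c = (unit_vec (length ?a) 0 :: 'a vec)"
  have c: "c \<in> carrier_vec (length ?a)" unfolding c_def by simp
  have "mat_of_cols (n d) ?a *\<^sub>v c \<in> carrier_vec (n d)" using mult_mat_vec_carrier[OF mat_of_cols_carrier(1) c] .
  hence "mat_of_cols (n d) ?a *\<^sub>v c \<in> ker_sp d n D d" unfolding ker_sp_def by simp
  hence "c = 0\<^sub>v (length ?a)" using q c unfolding qframe_def by blast
  moreover have "c $ 0 = 1" using ne unfolding c_def by simp
  ultimately show False using ne by simp
qed


lemma fuse_det:
  assumes jd: "j \<le> d" and qb: "qframe (n j) (ker_sp d n D j) (img_sp d n D j) bs"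
  shows "det (fuse_mat d n D j bs) \<noteq> 0"
proof -
  let ?a = "cfr d n D j"
  let ?a' = "cfr d n D (j - 1)"
  define P where "P = (if j = 0 then [] else map (\<lambda>v. D (j - 1) *\<^sub>v v) ?a')"
  define W where "W = P @ bs @ ?a"
  have fm: "fuse_mat d n D j bs = mat_of_cols (n j) W" unfolding fuse_mat_def P_def W_def by simp
  have qa: "qframe (n j) (carrier_vec (n j)) (ker_sp d n D j) ?a" by (rule cfr_qframe[OF jd])
  have K: "subsp (n j) (ker_sp d n D j)" by (rule ker_subsp[OF jd])
  have I: "subsp (n j) (img_sp d n D j)" by (rule img_subsp[OF jd])
  have IK: "img_sp d n D j \<subseteq> ker_sp d n D j" by (rule img_ker[OF jd])
  have ac: "set ?a \<subseteq> carrier_vec (n j)" using qa unfolding qframe_def by blast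
  have bK: "set bs \<subseteq> ker_sp d n D j" using qb unfolding qframe_def by blast
  have bc: "set bs \<subseteq> carrier_vec (n j)" using qb unfolding qframe_def by blast
  have Pimg: "set P \<subseteq> img_sp d n D j"
  proof (cases "j = 0")
    case True thus ?thesis unfolding P_def by simp
  next
    case False
    have qa': "qframe (n (j - 1)) (carrier_vec (n (j - 1))) (ker_sp d n D (j - 1)) ?a'"
      by (rule cfr_qframe) (use jd in simp)
    have a'c: "set ?a' \<subseteq> carrier_vec (n (j - 1))" using qa' unfolding qframe_def by blast
    show ?thesis
    proof
      fix x assume "x \<in> set P"
      then obtain y where y: "y \<in> set ?a'" and x: "x = D (j - 1) *\<^sub>v y" using False unfolding P_def by auto
      have "y \<in> carrier_vec (n (j - 1))" using y a'c by blast
      hence "x \<in> (\<lambda>v. D (j - 1) *\<^sub>v v) ` carrier_vec (n (j - 1))" using x by (intro image_eqI) 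
      thus "x \<in> img_sp d n D j" using False unfolding img_sp_def by simp
    qed
  qed
  have Pc: "set P \<subseteq> carrier_vec (n j)" using Pimg I unfolding subsp_def by blast
  have Wc: "set W \<subseteq> carrier_vec (n j)" using Pc bc ac unfolding W_def by auto
  have Mc: "mat_of_cols (n j) W \<in> carrier_mat (n j) (length W)" by simp
  have lin: "mat_of_cols (n j) W *\<^sub>v (c1 @\<^sub>v (c2 @\<^sub>v c3)) =
      mat_of_cols (n j) P *\<^sub>v c1 + (mat_of_cols (n j) bs *\<^sub>v c2 + mat_of_cols (n j) ?a *\<^sub>v c3)"
    if c1: "c1 \<in> carrier_vec (length P)" and c2: "c2 \<in> carrier_vec (length bs)"
      and c3: "c3 \<in> carrier_vec (length ?a)" for c1 c2 c3
  proof -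
    have c23: "c2 @\<^sub>v c3 \<in> carrier_vec (length (bs @ ?a))" using c2 c3 by simp
    show ?thesis unfolding W_def mat_of_cols_append_mult[OF c1 c23] mat_of_cols_append_mult[OF c2 c3] ..
  qed
  have inj: "\<forall>c\<in>carrier_vec (length W). mat_of_cols (n j) W *\<^sub>v c = 0\<^sub>v (n j) \<longrightarrow> c = 0\<^sub>v (length W)"
  proof (intro ballI impI)
    fix c assume c: "c \<in> carrier_vec (length W)" and Wc0: "mat_of_cols (n j) W *\<^sub>v c = 0\<^sub>v (n j)"
    have c': "c \<in> carrier_vec (length P + length (bs @ ?a))" using c unfolding W_def by simp
    obtain c1 c23 where c1: "c1 \<in> carrier_vec (length P)" and c23: "c23 \<in> carrier_vec (length (bs @ ?a))"
      and ce: "c = c1 @\<^sub>v c23" using split_vec[OF c'] by blast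
    have c23': "c23 \<in> carrier_vec (length bs + length ?a)" using c23 by simp
    obtain c2 c3 where c2: "c2 \<in> carrier_vec (length bs)" and c3: "c3 \<in> carrier_vec (length ?a)"
      and ce2: "c23 = c2 @\<^sub>v c3" using split_vec[OF c23'] by blast
    define x where "x = mat_of_cols (n j) P *\<^sub>v c1"
    define y where "y = mat_of_cols (n j) bs *\<^sub>v c2"
    define z where "z = mat_of_cols (n j) ?a *\<^sub>v c3"
    have xyz: "x + (y + z) = 0\<^sub>v (n j)" using Wc0 lin[OF c1 c2 c3] unfolding ce ce2 x_def y_def z_def by simp
    have xc: "x \<in> carrier_vec (n j)" and yc: "y \<in> carrier_vec (n j)" and zc: "z \<in> carrier_vec (n j)"
      unfolding x_def y_def z_def by simp_all
    have xI: "x \<in> img_sp d n D j" unfolding x_def by (rule lincomb_in_subsp[OF I Pimg c1])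
    have yK: "y \<in> ker_sp d n D j" unfolding y_def by (rule lincomb_in_subsp[OF K bK c2])
    have c30: "c3 = 0\<^sub>v (length ?a)"
    proof (cases "j < d")
      case False
      hence "j = d" using jd by simp
      hence "length ?a = 0" using cfr_d by simp
      thus ?thesis using c3 carrier_vec_0_eq by simp
    next
      case True
      have Dj: "D j \<in> carrier_mat (n (Suc j)) (n j)" by (rule Dcar[OF True])
      have "x \<in> ker_sp d n D j" using xI IK by blast
      hence Dx: "D j *\<^sub>v x = 0\<^sub>v (n (Suc j))" using True unfolding ker_sp_def by simp
      have Dy: "D j *\<^sub>v y = 0\<^sub>v (n (Suc j))" using yK True unfolding ker_sp_def by simp
      have "D j *\<^sub>v (x + (y + z)) = D j *\<^sub>v x + (D j *\<^sub>v y + D j *\<^sub>v z)"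
        using Dj xc yc zc by (simp add: mult_add_distrib_mat_vec[OF Dj])
      hence "D j *\<^sub>v z = 0\<^sub>v (n (Suc j))" using xyz Dx Dy Dj zc mult_zero_vec_right[OF Dj] by simp
      hence "z \<in> ker_sp d n D j" using zc unfolding ker_sp_def by simp
      thus ?thesis using qa c3 unfolding qframe_def z_def by blast
    qed
    have z0: "z = 0\<^sub>v (n j)" unfolding z_def c30 by (rule mult_zero_vec_right) simp
    have "y = (- 1) \<cdot>\<^sub>v x" by (rule vec_H1[OF xc yc zc xyz z0])
    hence "y \<in> img_sp d n D j" using xI I unfolding subsp_def by simp
    hence c20: "c2 = 0\<^sub>v (length bs)" using qb c2 unfolding qframe_def y_def by blast
    have y0: "y = 0\<^sub>v (n j)" unfolding y_def c20 by (rule mult_zero_vec_right) simp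
    have x0: "x = 0\<^sub>v (n j)" by (rule vec_H3[OF xc yc zc xyz y0 z0])
    have c10: "c1 = 0\<^sub>v (length P)"
    proof (cases "j = 0")
      case True
      hence "length P = 0" unfolding P_def by simp
      thus ?thesis using c1 carrier_vec_0_eq by simp
    next
      case False
      have qa': "qframe (n (j - 1)) (carrier_vec (n (j - 1))) (ker_sp d n D (j - 1)) ?a'"
        by (rule cfr_qframe) (use jd in simp)
      have a'c: "set ?a' \<subseteq> carrier_vec (n (j - 1))" using qa' unfolding qframe_def by blast
      have jd1: "j - 1 < d" using False jd by simp
      have Dj: "D (j - 1) \<in> carrier_mat (n j) (n (j - 1))" using Dcar[OF jd1] False by simp
      have c1': "c1 \<in> carrier_vec (length ?a')" using c1 False unfolding P_def by simp
      have "x = D (j - 1) *\<^sub>v (mat_of_cols (n (j - 1)) ?a' *\<^sub>v c1)"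
        unfolding x_def P_def using False mat_of_cols_map_mult[OF a'c Dj c1'] by simp
      hence "D (j - 1) *\<^sub>v (mat_of_cols (n (j - 1)) ?a' *\<^sub>v c1) = 0\<^sub>v (n (Suc (j - 1)))"
        using x0 False by simp
      hence "mat_of_cols (n (j - 1)) ?a' *\<^sub>v c1 \<in> ker_sp d n D (j - 1)"
        unfolding ker_sp_def by simp
      thus ?thesis using qa' c1' False unfolding qframe_def P_def by auto
    qed
    show "c = 0\<^sub>v (length W)" unfolding ce ce2 c10 c20 c30 W_def by (intro eq_vecI) auto
  qed
  have surj: "\<forall>v\<in>carrier_vec (n j). \<exists>c\<in>carrier_vec (length W). mat_of_cols (n j) W *\<^sub>v c = v"
  proof
    fix v :: "'a vec" assume v: "v \<in> carrier_vec (n j)"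
    obtain c3 where c3: "c3 \<in> carrier_vec (length ?a)" and k3: "v - mat_of_cols (n j) ?a *\<^sub>v c3 \<in> ker_sp d n D j"
      using qa v unfolding qframe_def by blast
    obtain c2 where c2: "c2 \<in> carrier_vec (length bs)"
      and k2: "(v - mat_of_cols (n j) ?a *\<^sub>v c3) - mat_of_cols (n j) bs *\<^sub>v c2 \<in> img_sp d n D j"
      using qb k3 unfolding qframe_def by blast
    define u where "u = (v - mat_of_cols (n j) ?a *\<^sub>v c3) - mat_of_cols (n j) bs *\<^sub>v c2"
    have "\<exists>c1 \<in> carrier_vec (length P). mat_of_cols (n j) P *\<^sub>v c1 = u"
    proof (cases "j = 0")
      case True
      hence P0: "P = []" unfolding P_def by simp
      have "u = 0\<^sub>v (n j)" using k2 True unfolding u_def img_sp_def by simp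
      thus ?thesis unfolding P0 using mat_of_cols_Nil_mult[of "0\<^sub>v 0" "n j"] by (intro bexI[of _ "0\<^sub>v 0"]) auto
    next
      case False
      have qa': "qframe (n (j - 1)) (carrier_vec (n (j - 1))) (ker_sp d n D (j - 1)) ?a'"
        by (rule cfr_qframe) (use jd in simp)
      have a'c: "set ?a' \<subseteq> carrier_vec (n (j - 1))" using qa' unfolding qframe_def by blast
      have jd1: "j - 1 < d" using False jd by simp
      have Dj: "D (j - 1) \<in> carrier_mat (n j) (n (j - 1))" using Dcar[OF jd1] False by simp
      obtain w where w: "w \<in> carrier_vec (n (j - 1))" and uw: "u = D (j - 1) *\<^sub>v w"
        using k2 False unfolding u_def img_sp_def by auto
      obtain c1 where c1: "c1 \<in> carrier_vec (length ?a')"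
        and k1: "w - mat_of_cols (n (j - 1)) ?a' *\<^sub>v c1 \<in> ker_sp d n D (j - 1)"
        using qa' w unfolding qframe_def by blast
      define y where "y = mat_of_cols (n (j - 1)) ?a' *\<^sub>v c1"
      have yc: "y \<in> carrier_vec (n (j - 1))" unfolding y_def by simp
      have "D (j - 1) *\<^sub>v (w - y) = 0\<^sub>v (n (Suc (j - 1)))" using k1 jd1 unfolding ker_sp_def y_def by simp
      hence "D (j - 1) *\<^sub>v w - D (j - 1) *\<^sub>v y = 0\<^sub>v (n j)"
        using mult_minus_distrib_mat_vec[OF Dj w yc] False by simp
      hence eqwy: "D (j - 1) *\<^sub>v w = D (j - 1) *\<^sub>v y"
      proof (intro eq_vecI)
        fix i assume h: "D (j - 1) *\<^sub>v w - D (j - 1) *\<^sub>v y = 0\<^sub>v (n j)" and i: "i < dim_vec (D (j - 1) *\<^sub>v y)"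
        have i': "i < n j" using i Dj by simp
        have "(D (j - 1) *\<^sub>v w - D (j - 1) *\<^sub>v y) $ i = 0" using h i' by simp
        thus "(D (j - 1) *\<^sub>v w) $ i = (D (j - 1) *\<^sub>v y) $ i" using i' Dj by simp
      qed (use Dj in simp)
      have c1': "c1 \<in> carrier_vec (length P)" using c1 False unfolding P_def by simp
      have "mat_of_cols (n j) P *\<^sub>v c1 = D (j - 1) *\<^sub>v y"
        unfolding y_def P_def using False mat_of_cols_map_mult[OF a'c Dj c1] by simp
      hence e: "mat_of_cols (n j) P *\<^sub>v c1 = u" using eqwy uw by simp
      show ?thesis using e c1' by (intro bexI[of _ c1]) simp_all
    qed
    then obtain c1 where c1: "c1 \<in> carrier_vec (length P)" and e1: "mat_of_cols (n j) P *\<^sub>v c1 = u" by blast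
    have cW: "c1 @\<^sub>v (c2 @\<^sub>v c3) \<in> carrier_vec (length W)" unfolding W_def using c1 c2 c3 by simp
    have "mat_of_cols (n j) W *\<^sub>v (c1 @\<^sub>v (c2 @\<^sub>v c3)) = v"
      unfolding lin[OF c1 c2 c3] e1 by (rule vec_H4[OF v _ _ u_def]) simp_all
    thus "\<exists>c\<in>carrier_vec (length W). mat_of_cols (n j) W *\<^sub>v c = v" using cW by blast
  qed
  show ?thesis using bij_square[OF Mc inj surj] fm by simp
qed

lemma hframes_exist: "\<exists>bss. hframes d n D bss"
proof -
  define bss where "bss = map (\<lambda>j. SOME bs. qframe (n j) (ker_sp d n D j) (img_sp d n D j) bs) [0..<Suc d]"
  have "qframe (n j) (ker_sp d n D j) (img_sp d n D j) (bss ! j)" if j: "j \<le> d" for j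
  proof -
    have "bss ! j = (SOME bs. qframe (n j) (ker_sp d n D j) (img_sp d n D j) bs)"
      unfolding bss_def using j by (simp del: upt_Suc)
    thus ?thesis using someI_ex[OF qframe_exists[OF img_subsp[OF j] ker_subsp[OF j] img_ker[OF j]]] by simp
  qed
  thus ?thesis unfolding hframes_def by (intro exI[of _ bss]) (simp add: bss_def)
qed

end


lemma conj_one: "conjugate (1::'a::conjugatable_field) = 1"
proof -
  have "conjugate (1::'a) = conjugate 1 * conjugate 1" using conjugate_dist_mul[of "1::'a" 1] by simp
  moreover have "conjugate (1::'a) \<noteq> 0" by simp
  ultimately show ?thesis by (metis mult_cancel_left2)
qed

lemma conj_hom: "comm_ring_hom (conjugate :: 'a::conjugatable_field \<Rightarrow> 'a)"
  by unfold_locales (auto simp: conj_one conjugate_dist_mul conjugate_dist_add)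

lemma det_conj:
  fixes A :: "'a::conjugatable_field mat"
  shows "det (map_mat conjugate A) = conjugate (det A)"
  using comm_ring_hom.hom_det[OF conj_hom] .

context
  fixes m :: nat and sp :: "'a::{conjugatable_field,real_normed_field} vec \<Rightarrow> 'a vec \<Rightarrow> 'a"
  assumes spd: "scalar_product m sp"
begin

lemma sp_add: "u \<in> carrier_vec m \<Longrightarrow> v \<in> carrier_vec m \<Longrightarrow> w \<in> carrier_vec m \<Longrightarrow> sp (u + v) w = sp u w + sp v w"
  using spd unfolding scalar_product_def by blast

lemma sp_smult: "u \<in> carrier_vec m \<Longrightarrow> v \<in> carrier_vec m \<Longrightarrow> sp (a \<cdot>\<^sub>v u) v = a * sp u v"
  using spd unfolding scalar_product_def by blast

lemma sp_conj: "u \<in> carrier_vec m \<Longrightarrow> v \<in> carrier_vec m \<Longrightarrow> sp u v = conjugate (sp v u)"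
  using spd unfolding scalar_product_def by blast

lemma sp_pos: "u \<in> carrier_vec m \<Longrightarrow> u \<noteq> 0\<^sub>v m \<Longrightarrow> sp u u \<noteq> 0"
proof -
  assume u: "u \<in> carrier_vec m" "u \<noteq> 0\<^sub>v m"
  then obtain t :: real where "t > 0" "sp u u = of_real t" using spd unfolding scalar_product_def by blast
  thus "sp u u \<noteq> 0" by simp
qed

lemma sp_expand1:
  assumes u: "u \<in> carrier_vec m" and w: "w \<in> carrier_vec m"
  shows "sp u w = (\<Sum>p<m. u $ p * sp (unit_vec m p) w)"
proof -
  define tr where "tr k = vec m (\<lambda>i. if i < k then u $ i else 0)" for k
  have trc: "tr k \<in> carrier_vec m" for k unfolding tr_def by simp
  have main: "k \<le> m \<longrightarrow> sp (tr k) w = (\<Sum>p<k. u $ p * sp (unit_vec m p) w)" for k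
  proof (induction k)
    case 0
    have "tr 0 = 0 \<cdot>\<^sub>v u" unfolding tr_def using u by (intro eq_vecI) auto
    hence "sp (tr 0) w = 0 * sp u w" using sp_smult[OF u w] by simp
    thus ?case by simp
  next
    case (Suc k)
    show ?case
    proof
      assume k: "Suc k \<le> m"
      have "tr (Suc k) = tr k + u $ k \<cdot>\<^sub>v unit_vec m k" unfolding tr_def using u k by (intro eq_vecI) (auto simp: less_Suc_eq)
      hence "sp (tr (Suc k)) w = sp (tr k) w + u $ k * sp (unit_vec m k) w"
        using sp_add[OF trc _ w, of "u $ k \<cdot>\<^sub>v unit_vec m k" k] sp_smult[OF _ w, of "unit_vec m k" "u $ k"] by simp
      thus "sp (tr (Suc k)) w = (\<Sum>p<Suc k. u $ p * sp (unit_vec m p) w)" using Suc.IH k by simp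
    qed
  qed
  moreover have "tr m = u" unfolding tr_def using u by (intro eq_vecI) auto
  ultimately show ?thesis using main[of m] by simp
qed

lemma sp_expand:
  assumes u: "u \<in> carrier_vec m" and w: "w \<in> carrier_vec m"
  shows "sp u w = (\<Sum>p<m. \<Sum>q<m. u $ p * conjugate (w $ q) * sp (unit_vec m p) (unit_vec m q))"
proof -
  have e2: "sp (unit_vec m p) w = (\<Sum>q<m. conjugate (w $ q) * sp (unit_vec m p) (unit_vec m q))" if p: "p < m" for p
  proof -
    have "sp (unit_vec m p) w = conjugate (sp w (unit_vec m p))" using sp_conj[OF _ w] by simp
    also have "\<dots> = conjugate (\<Sum>q<m. w $ q * sp (unit_vec m q) (unit_vec m p))"
      using sp_expand1[OF w, of "unit_vec m p"] by simp
    also have "\<dots> = (\<Sum>q<m. conjugate (w $ q) * conjugate (sp (unit_vec m q) (unit_vec m p)))"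
      by (simp add: sum_conjugate conjugate_dist_mul)
    also have "\<dots> = (\<Sum>q<m. conjugate (w $ q) * sp (unit_vec m p) (unit_vec m q))"
      by (intro sum.cong refl) (metis sp_conj unit_vec_carrier)
    finally show ?thesis .
  qed
  have "sp u w = (\<Sum>p<m. u $ p * sp (unit_vec m p) w)" by (rule sp_expand1[OF u w])
  also have "\<dots> = (\<Sum>p<m. u $ p * (\<Sum>q<m. conjugate (w $ q) * sp (unit_vec m p) (unit_vec m q)))"
    by (intro sum.cong refl) (simp add: e2)
  also have "\<dots> = (\<Sum>p<m. \<Sum>q<m. u $ p * conjugate (w $ q) * sp (unit_vec m p) (unit_vec m q))"
    by (simp add: sum_distrib_left mult.assoc)
  finally show ?thesis .
qed

lemma gram_std: "gram sp (std_basis m) = mat m m (\<lambda>(i, k). sp (unit_vec m i) (unit_vec m k))"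
  unfolding gram_def std_basis_def by (intro eq_matI) auto

lemma gram_det_nz: "det (gram sp (std_basis m)) \<noteq> 0"
proof
  let ?G = "gram sp (std_basis m)"
  have Gc: "?G \<in> carrier_mat m m" unfolding gram_std by simp
  assume "det ?G = 0"
  then obtain v where v: "v \<in> carrier_vec m" "v \<noteq> 0\<^sub>v m" "?G *\<^sub>v v = 0\<^sub>v m"
    using det_0_iff_vec_prod_zero_field[OF Gc] by blast
  define u where "u = conjugate v"
  have uc: "u \<in> carrier_vec m" unfolding u_def using v by simp
  have un: "u \<noteq> 0\<^sub>v m" unfolding u_def using v by simp
  have Gv: "(\<Sum>q<m. sp (unit_vec m p) (unit_vec m q) * v $ q) = 0" if p: "p < m" for p
  proof -
    have "(?G *\<^sub>v v) $ p = 0" using v p by simp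
    moreover have "(?G *\<^sub>v v) $ p = (\<Sum>q<m. sp (unit_vec m p) (unit_vec m q) * v $ q)"
      unfolding gram_std using p v by (simp add: scalar_prod_def lessThan_atLeast0)
    ultimately show ?thesis by simp
  qed
  have "sp u u = (\<Sum>p<m. \<Sum>q<m. u $ p * conjugate (u $ q) * sp (unit_vec m p) (unit_vec m q))"
    by (rule sp_expand[OF uc uc])
  also have "\<dots> = (\<Sum>p<m. u $ p * (\<Sum>q<m. sp (unit_vec m p) (unit_vec m q) * v $ q))"
    using v unfolding u_def by (simp add: sum_distrib_left mult.commute mult.left_commute)
  also have "\<dots> = 0" using Gv by simp
  finally show False using sp_pos[OF uc un] by simp
qed

end


lemma mat_unit_index: "(A :: 'a::comm_ring_1 mat) \<in> carrier_mat m m \<Longrightarrow> p < m \<Longrightarrow> i < m \<Longrightarrow> (A *\<^sub>v unit_vec m i) $ p = A $$ (p, i)"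
  by simp

lemma gram_rel:
  fixes sp1 sp2 :: "'a::{conjugatable_field,real_normed_field} vec \<Rightarrow> 'a vec \<Rightarrow> 'a"
  assumes sp2: "scalar_product m sp2"
    and G: "Gm \<in> carrier_mat m m" and G': "Gm' \<in> carrier_mat m m" and inv: "Gm' * Gm = 1\<^sub>m m"
    and sa: "\<forall>u\<in>carrier_vec m. \<forall>v\<in>carrier_vec m. sp2 (Gm *\<^sub>v u) v = sp1 u (Gm' *\<^sub>v v)"
  shows "gram sp1 (std_basis m) = transpose_mat Gm * gram sp2 (std_basis m) * map_mat conjugate Gm"
proof (rule eq_matI)
  let ?G2 = "gram sp2 (std_basis m)"
  have G2: "?G2 = mat m m (\<lambda>(i, k). sp2 (unit_vec m i) (unit_vec m k))" by (rule gram_std[OF sp2])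
  fix i k assume "i < dim_row (transpose_mat Gm * ?G2 * map_mat conjugate Gm)"
    and "k < dim_col (transpose_mat Gm * ?G2 * map_mat conjugate Gm)"
  hence i: "i < m" and k: "k < m" using G by auto
  have ek: "Gm' *\<^sub>v (Gm *\<^sub>v unit_vec m k) = unit_vec m k"
  proof -
    have "Gm' *\<^sub>v (Gm *\<^sub>v unit_vec m k) = (Gm' * Gm) *\<^sub>v unit_vec m k" using G G' by simp
    thus ?thesis using inv by simp
  qed
  have "gram sp1 (std_basis m) $$ (i, k) = sp1 (unit_vec m i) (unit_vec m k)"
    unfolding gram_def std_basis_def using i k by simp
  also have "\<dots> = sp1 (unit_vec m i) (Gm' *\<^sub>v (Gm *\<^sub>v unit_vec m k))" unfolding ek ..
  also have "\<dots> = sp2 (Gm *\<^sub>v unit_vec m i) (Gm *\<^sub>v unit_vec m k)"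
    using sa G by simp
  also have "\<dots> = (\<Sum>p<m. \<Sum>q<m. (Gm *\<^sub>v unit_vec m i) $ p * conjugate ((Gm *\<^sub>v unit_vec m k) $ q) *
        sp2 (unit_vec m p) (unit_vec m q))"
    by (rule sp_expand[OF sp2]) (use G in simp_all)
  also have "\<dots> = (\<Sum>p<m. \<Sum>q<m. Gm $$ (p, i) * conjugate (Gm $$ (q, k)) * ?G2 $$ (p, q))"
    using G i k unfolding G2 by (intro sum.cong refl) simp
  also have "\<dots> = (\<Sum>q<m. \<Sum>p<m. Gm $$ (p, i) * conjugate (Gm $$ (q, k)) * ?G2 $$ (p, q))"
    by (rule sum.swap)
  also have "\<dots> = (\<Sum>q<m. (\<Sum>p<m. Gm $$ (p, i) * ?G2 $$ (p, q)) * conjugate (Gm $$ (q, k)))"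
    by (intro sum.cong refl) (simp add: sum_distrib_left sum_distrib_right mult_ac)
  also have "\<dots> = (transpose_mat Gm * ?G2 * map_mat conjugate Gm) $$ (i, k)"
    using G i k unfolding G2 by (simp add: scalar_prod_def lessThan_atLeast0)
  finally show "gram sp1 (std_basis m) $$ (i, k) = (transpose_mat Gm * ?G2 * map_mat conjugate Gm) $$ (i, k)" .
qed (use G in \<open>auto simp: gram_def std_basis_def\<close>)


lemma wedge_rel:
  fixes sp1 sp2 :: "'a::{conjugatable_field,real_normed_field} vec \<Rightarrow> 'a vec \<Rightarrow> 'a"
  assumes nc: "\<And>z::'a. norm (conjugate z) = norm z"
    and sp2: "scalar_product m sp2"
    and G: "Gm \<in> carrier_mat m m" and G': "Gm' \<in> carrier_mat m m" and inv: "Gm' * Gm = 1\<^sub>m m"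
    and sa: "\<forall>u\<in>carrier_vec m. \<forall>v\<in>carrier_vec m. sp2 (Gm *\<^sub>v u) v = sp1 u (Gm' *\<^sub>v v)"
  shows "wedge_norm sp1 (std_basis m) = norm (det Gm) * wedge_norm sp2 (std_basis m)"
proof -
  let ?G2 = "gram sp2 (std_basis m)"
  have G2c: "?G2 \<in> carrier_mat m m" unfolding gram_std[OF sp2] by simp
  have "det (gram sp1 (std_basis m)) = det (transpose_mat Gm * ?G2 * map_mat conjugate Gm)"
    unfolding gram_rel[OF sp2 G G' inv sa] ..
  also have "\<dots> = det (transpose_mat Gm) * det ?G2 * det (map_mat conjugate Gm)"
    using G G2c by (simp add: det_mult[of _ m])
  also have "\<dots> = det Gm * det ?G2 * conjugate (det Gm)"
    using G by (simp add: det_transpose det_conj)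
  finally have "norm (det (gram sp1 (std_basis m))) = (norm (det Gm))\<^sup>2 * norm (det ?G2)"
    by (simp add: norm_mult nc power2_eq_square)
  thus ?thesis unfolding wedge_norm_def by (simp add: real_sqrt_mult)
qed

context
  fixes d :: nat and n :: "nat \<Rightarrow> nat" and D :: "nat \<Rightarrow> 'a::field mat"
  assumes cc: "cochain_complex d n D"
begin

lemma sgnpow_nz: "x \<noteq> 0 \<Longrightarrow> sgnpow j x \<noteq> (0::'b::field)"
  unfolding sgnpow_def by simp

lemma phiC_inj: "phiC d n D x = phiC d n D y \<Longrightarrow> x = y"
proof -
  assume e: "phiC d n D x = phiC d n D y"
  obtain bss where h: "hframes d n D bss" using hframes_exist[OF cc] by blast
  define Pr where "Pr = (\<Prod>j\<le>d. sgnpow j (inverse (det (fuse_mat d n D j (bss ! j)))))"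
  have "Pr \<noteq> 0"
  proof -
    have "sgnpow j (inverse (det (fuse_mat d n D j (bss ! j)))) \<noteq> 0" if jd: "j \<le> d" for j
    proof -
    have "qframe (n j) (ker_sp d n D j) (img_sp d n D j) (bss ! j)" using h jd unfolding hframes_def by blast
    hence "det (fuse_mat d n D j (bss ! j)) \<noteq> 0" by (rule fuse_det[OF cc jd])
    thus ?thesis by (intro sgnpow_nz) simp
    qed
    thus ?thesis unfolding Pr_def by simp
  qed
  moreover have "(-1) ^ sgnN d n D * x * Pr = (-1) ^ sgnN d n D * y * Pr"
    using fun_cong[OF e, of bss] h unfolding phiC_def Pr_def by simp
  ultimately show "x = y" by simp
qed

lemma THE_phiC: "(THE x. phiC d n D x = phiC d n D c) = c"
  by (rule the_equality) (auto dest: phiC_inj)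

end


lemma prod_split:
  fixes f :: "nat \<Rightarrow> 'b::comm_monoid_mult"
  assumes r1: "1 \<le> r" and dr: "d = 2 * r - 1"
  shows "(\<Prod>j\<le>d. f j) = (\<Prod>j<r. f j * f (d - j))"
proof -
  have U: "{..d} = {..<r} \<union> {r..d}" using r1 dr by auto
  have "(\<Prod>j\<le>d. f j) = (\<Prod>j<r. f j) * (\<Prod>j\<in>{r..d}. f j)"
    unfolding U by (rule prod.union_disjoint) auto
  also have "(\<Prod>j\<in>{r..d}. f j) = (\<Prod>j<r. f (d - j))"
    by (rule prod.reindex_bij_witness[of "{r..d}" "\<lambda>j. d - j" "\<lambda>j. d - j"]) (use r1 dr in auto)
  finally show ?thesis by (simp add: prod.distrib)
qed

lemma norm_sgnpow: "norm (sgnpow j (x::'a::real_normed_field)) = sgnpow j (norm x)"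
  unfolding sgnpow_def by (simp add: norm_inverse)

lemma term_one:
  fixes a b w w' :: real
  assumes "a > 0" "b > 0" "w' > 0" "w = b * w'" "even e \<longleftrightarrow> odd j"
  shows "sgnpow j a * sgnpow e (a * b) * (sgnpow j w * sgnpow e w') = 1"
  using assms unfolding sgnpow_def by (auto simp: field_simps)

lemma main_generic:
  assumes nc: "\<And>z::'a::{conjugatable_field,real_normed_field}. norm (conjugate z) = norm z"
  shows "lemma4p3_claim TYPE('a)"
  unfolding lemma4p3_claim_def
proof (intro allI impI)
  fix r d :: nat and n :: "nat \<Rightarrow> nat" and D Gam :: "nat \<Rightarrow> 'a mat"
    and sp :: "nat \<Rightarrow> 'a vec \<Rightarrow> 'a vec \<Rightarrow> 'a" and g :: "nat \<Rightarrow> 'a"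
  assume r1: "1 \<le> r" and dr: "d = 2 * r - 1" and cc: "cochain_complex d n D"
    and ch: "chirality d n Gam" and spd: "\<forall>j\<le>d. scalar_product (n j) (sp j)"
    and sa: "\<forall>j\<le>d. \<forall>u\<in>carrier_vec (n j). \<forall>v\<in>carrier_vec (n (d - j)).
          sp (d - j) (Gam j *\<^sub>v u) v = sp j u (Gam (d - j) *\<^sub>v v)"
    and gnz: "\<forall>j<r. g j \<noteq> 0"
  define w where "w j = wedge_norm (sp j) (std_basis (n j))" for j
  have Gc: "Gam j \<in> carrier_mat (n (d - j)) (n j)" and Ginv: "Gam (d - j) * Gam j = 1\<^sub>m (n j)"
    if "j \<le> d" for j using ch that unfolding chirality_def by blast+
  have facts: "n (d - j) = n j \<and> det (Gam j) \<noteq> 0 \<and> w j = norm (det (Gam j)) * w (d - j)" if jd: "j \<le> d" for j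
  proof -
    have jd': "d - j \<le> d" by simp
    have ddj: "d - (d - j) = j" using jd by simp
    have G1: "Gam j \<in> carrier_mat (n (d - j)) (n j)" by (rule Gc[OF jd])
    have G2: "Gam (d - j) \<in> carrier_mat (n j) (n (d - j))" using Gc[OF jd'] ddj by simp
    have I1: "Gam (d - j) * Gam j = 1\<^sub>m (n j)" by (rule Ginv[OF jd])
    have I2: "Gam j * Gam (d - j) = 1\<^sub>m (n (d - j))" using Ginv[OF jd'] ddj by simp
    have inj1: "\<forall>c\<in>carrier_vec (n j). Gam j *\<^sub>v c = 0\<^sub>v (n (d - j)) \<longrightarrow> c = 0\<^sub>v (n j)"
    proof (intro ballI impI)
      fix c :: "'a vec" assume c: "c \<in> carrier_vec (n j)" and z: "Gam j *\<^sub>v c = 0\<^sub>v (n (d - j))"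
      have "c = (Gam (d - j) * Gam j) *\<^sub>v c" using I1 c by simp
      also have "\<dots> = Gam (d - j) *\<^sub>v (Gam j *\<^sub>v c)" using G1 G2 c by simp
      also have "\<dots> = 0\<^sub>v (n j)" unfolding z by (rule mult_zero_vec_right[OF G2])
      finally show "c = 0\<^sub>v (n j)" .
    qed
    have inj2: "\<forall>c\<in>carrier_vec (n (d - j)). Gam (d - j) *\<^sub>v c = 0\<^sub>v (n j) \<longrightarrow> c = 0\<^sub>v (n (d - j))"
    proof (intro ballI impI)
      fix c :: "'a vec" assume c: "c \<in> carrier_vec (n (d - j))" and z: "Gam (d - j) *\<^sub>v c = 0\<^sub>v (n j)"
      have "c = (Gam j * Gam (d - j)) *\<^sub>v c" using I2 c by simp
      also have "\<dots> = Gam j *\<^sub>v (Gam (d - j) *\<^sub>v c)" using G1 G2 c by simp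
      also have "\<dots> = 0\<^sub>v (n (d - j))" unfolding z by (rule mult_zero_vec_right[OF G1])
      finally show "c = 0\<^sub>v (n (d - j))" .
    qed
    have nn: "n (d - j) = n j" using inj_le[OF G1 inj1] inj_le[OF G2 inj2] by simp
    have G1': "Gam j \<in> carrier_mat (n j) (n j)" using G1 nn by simp
    have G2': "Gam (d - j) \<in> carrier_mat (n j) (n j)" using G2 nn by simp
    have "det (Gam (d - j)) * det (Gam j) = 1" using det_mult[OF G2' G1'] I1 by simp
    hence dnz: "det (Gam j) \<noteq> 0" by auto
    have sp2: "scalar_product (n j) (sp (d - j))" using spd[rule_format, OF jd'] nn by simp
    have sa': "\<forall>u\<in>carrier_vec (n j). \<forall>v\<in>carrier_vec (n j). sp (d - j) (Gam j *\<^sub>v u) v = sp j u (Gam (d - j) *\<^sub>v v)"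
      using sa jd nn by simp
    have "w j = norm (det (Gam j)) * wedge_norm (sp (d - j)) (std_basis (n j))"
      unfolding w_def by (rule wedge_rel[OF nc sp2 G1' G2' I1 sa'])
    thus ?thesis using nn dnz unfolding w_def by simp
  qed
  have wpos: "w j > 0" if jd: "j \<le> d" for j
  proof -
    have "det (gram (sp j) (std_basis (n j))) \<noteq> 0" using gram_det_nz spd jd by blast
    thus ?thesis unfolding w_def wedge_norm_def by simp
  qed
  have "detH_norm d n D sp (rho_Gamma r d n D Gam g) = detC_norm d n sp (c_Gamma r d n Gam g)"
    unfolding detH_norm_def rho_Gamma_def THE_phiC[OF cc] ..
  also have "\<dots> = norm (c_Gamma r d n Gam g) * (\<Prod>j\<le>d. sgnpow j (w j))"
    unfolding detC_norm_def w_def ..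
  also have "norm (c_Gamma r d n Gam g) = (\<Prod>j<r. sgnpow j (norm (g j)) * sgnpow (d - j) (norm (g j) * norm (det (Gam j))))"
    unfolding c_Gamma_def by (simp add: norm_mult norm_power prod_norm[symmetric] norm_sgnpow)
  also have "(\<Prod>j\<le>d. sgnpow j (w j)) = (\<Prod>j<r. sgnpow j (w j) * sgnpow (d - j) (w (d - j)))"
    by (rule prod_split[OF r1 dr])
  also have "(\<Prod>j<r. sgnpow j (norm (g j)) * sgnpow (d - j) (norm (g j) * norm (det (Gam j)))) *
      (\<Prod>j<r. sgnpow j (w j) * sgnpow (d - j) (w (d - j))) =
      (\<Prod>j<r. sgnpow j (norm (g j)) * sgnpow (d - j) (norm (g j) * norm (det (Gam j))) *
        (sgnpow j (w j) * sgnpow (d - j) (w (d - j))))"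
    by (simp add: prod.distrib)
  also have "\<dots> = (\<Prod>j<r. 1)"
  proof (rule prod.cong[OF refl])
    fix j assume "j \<in> {..<r}"
    hence jr: "j < r" by simp
    hence jd: "j \<le> d" using dr by simp
    have par: "even (d - j) \<longleftrightarrow> odd j" using jr dr r1 by presburger
    have f: "n (d - j) = n j \<and> det (Gam j) \<noteq> 0 \<and> w j = norm (det (Gam j)) * w (d - j)" by (rule facts[OF jd])
    show "sgnpow j (norm (g j)) * sgnpow (d - j) (norm (g j) * norm (det (Gam j))) *
        (sgnpow j (w j) * sgnpow (d - j) (w (d - j))) = 1"
      by (rule term_one) (use gnz jr f wpos[of "d - j"] par in auto)
  qed
  finally show "detH_norm d n D sp (rho_Gamma r d n D Gam g) = 1" by simp
qed

lemma nc_real: "norm (conjugate z) = norm (z::real)" by simp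
lemma nc_complex: "norm (conjugate z) = norm (z::complex)" by simp

theorem lemma4p3:
  shows "lemma4p3_claim TYPE(real) \<and> lemma4p3_claim TYPE(complex)"
  using main_generic[OF nc_real] main_generic[OF nc_complex] by blast

end
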